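(* Let $R>r>0$, $q=\frac{1}{2r}-\frac{1}{2R}$, and let $K^{-1/2}_0$, $\mathcal{K}^*_{\partial\Omega}$ and the family $\{\mathbb{E}(t)\}_{t\in[-1/2,1/2]}$ be as described in the context. Then $\mathcal{K}^*_{\partial\Omega}$ has the spectral resolution $$\mathcal{K}^*_{\partial\Omega}=\int_{-1/2}^{1/2} t\,d\mathbb{E}(t),$$ that is, for all $f,g\in K^{-1/2}_0$, $$\langle f,\mathcal{K}^*_{\partial\Omega}[g]\rangle_{-1/2}=\int_{-1/2}^{1/2} t\,d\langle f,\mathbb{E}(t)g\rangle_{-1/2}.$$
   Context: Setting (crescent domain). Identify $\mathbb{R}^2$ with $\mathbb{C}$; for $a\in\mathbb{R}\setminus\{0\}$ let $B_a$ be the open disk of radius $|a|$ centered at $(a,0)$. Fix $R>r>0$ and let $\Omega=B_R\setminus\overline{B_r}$ (a crescent with a cusp at $0$). Put $q=\frac{1}{2r}-\frac{1}{2R}>0$. For $k\in\mathbb{R}\setminus\{0\}$ define the diagonal matrices $$\mathbb{S}(k)=\frac{1}{2|k|}\begin{bmatrix}1-e^{-|k|q}&0\\0&1+e^{-|k|q}\end{bmatrix},\qquad \mathbb{K}(k)=\frac12 e^{-|k|q}\begin{bmatrix}-1&0\\0&1\end{bmatrix}.$$ The space $K^{-1/2}_0$ is the Hilbert space of pairs $\hat\varphi=(\hat\varphi_1,\hat\varphi_2)^T$ of measurable complex-valued functions on $\mathbb{R}$ (modulo a.e. equality) with $\int_{\mathbb{R}}\hat\varphi(k)^T\mathbb{S}(k)\overline{\hat\varphi(k)}\,dk<\infty$,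 with inner product $\langle\psi,\varphi\rangle_{-1/2}=\int_{\mathbb{R}}\hat\psi(k)^T\mathbb{S}(k)\overline{\hat\varphi(k)}\,dk$. (In the paper an element $\varphi$ of this space is the boundary density $\varphi=U^{-1}P\hat\varphi$ on $\partial\Omega$, where $P=\frac1{\sqrt2}\begin{bmatrix}-1&1\\1&1\end{bmatrix}$ and $U\varphi=(\mathcal{F}(h_R\varphi_R),\mathcal{F}(h_r\varphi_r))^T$ is the Fourier transform of the density pulled back by $z\mapsto 1/z$ to the lines $x=\frac1{2R}$, $x=\frac1{2r}$, with $h_a(y)=1/((2a)^{-2}+y^2)$; one writes $PU\varphi=(\hat\varphi_1,\hat\varphi_2)^T$.) The Neumann–Poincaré operator $\mathcal{K}^*_{\partial\Omega}$ on $K^{-1/2}_0$ is defined by $PU(\mathcal{K}^*_{\partial\Omega}[\varphi])(k)=\mathbb{K}(k)\,PU\varphi(k)$, i.e. it multiplies $\hat\varphi_1$ by $-\frac12e^{-|k|q}$ and $\hat\varphi_2$ by $\frac12 e^{-|k|q}$. For $s\in\mathbb{R}\cup\{\infty\}$ define orthogonal projections $\mathcal{P}^1(s)(\hat\varphi_1,\hat\varphi_2)=(\chi_{(-\infty,s]}\hat\varphi_1,0)$ and $\mathcal{P}^2(s)(\hat\varphi_1,\hat\varphi_2)=(0,\chi_{(-\infty,s]}\hat\varphi_2)$ (with $\chi_{(-\infty,\infty]}\equiv1$), and let $\mathbb{I}=\mathcal{P}^1(\infty)+\mathcal{P}^2(\infty)$ be the identity. Define $$\mathbb{E}(t)=\begin{cases}\mathcal{P}^1\!\left(-\frac{\ln(-2t)}{q}\right)-\mathcal{P}^1\!\left(\frac{\ln(-2t)}{q}\right),&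 t\in[-1/2,0),\\[2pt] \mathcal{P}^2\!\left(\frac{\ln(2t)}{q}\right)-\mathcal{P}^2\!\left(-\frac{\ln(2t)}{q}\right)+\mathbb{I},& t\in(0,1/2],\end{cases}\qquad \mathbb{E}(0)=\lim_{t\to0^+}\mathbb{E}(t).$$ *)

theory Defs
  imports "HOL-Analysis.Analysis"
begin

definition q_of :: "real \<Rightarrow> real \<Rightarrow> real" where
  "q_of R r = 1 / (2 * r) - 1 / (2 * R)"

definition S11 :: "real \<Rightarrow> real \<Rightarrow> real" where
  "S11 q k = (1 - exp (- \<bar>k\<bar> * q)) / (2 * \<bar>k\<bar>)"
definition S22 :: "real \<Rightarrow> real \<Rightarrow> real" where
  "S22 q k = (1 + exp (- \<bar>k\<bar> * q)) / (2 * \<bar>k\<bar>)"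
definition K11 :: "real \<Rightarrow> real \<Rightarrow> real" where
  "K11 q k = - (1/2) * exp (- \<bar>k\<bar> * q)"
definition K22 :: "real \<Rightarrow> real \<Rightarrow> real" where
  "K22 q k = (1/2) * exp (- \<bar>k\<bar> * q)"

text \<open>Representatives (hat phi_1, hat phi_2) of elements of K^{-1/2}_0.\<close>
type_synonym dens = "(real \<Rightarrow> complex) \<times> (real \<Rightarrow> complex)"

definition in_K :: "real \<Rightarrow> dens \<Rightarrow> bool" where
  "in_K q \<phi> \<longleftrightarrow>
     fst \<phi> \<in> borel_measurable lborel \<and> snd \<phi> \<in> borel_measurable lborel \<and>
     integrable lborel (\<lambda>k. S11 q k * (cmod (fst \<phi> k))\<^sup>2) \<and>
     integrable lborel (\<lambda>k. S22 q k * (cmod (snd \<phi> k))\<^sup>2)"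

definition ipK :: "real \<Rightarrow> dens \<Rightarrow> dens \<Rightarrow> complex" where
  "ipK q \<psi> \<phi> = (LINT k|lborel.
      complex_of_real (S11 q k) * fst \<psi> k * cnj (fst \<phi> k)
    + complex_of_real (S22 q k) * snd \<psi> k * cnj (snd \<phi> k))"

definition NP :: "real \<Rightarrow> dens \<Rightarrow> dens" where
  "NP q \<phi> = (\<lambda>k. complex_of_real (K11 q k) * fst \<phi> k,
              \<lambda>k. complex_of_real (K22 q k) * snd \<phi> k)"

definition chi :: "real \<Rightarrow> real \<Rightarrow> complex" where
  "chi s k = (if k \<le> s then 1 else 0)"

definition P1 :: "real \<Rightarrow> dens \<Rightarrow> dens" where
  "P1 s \<phi> = (\<lambda>k. chi s k * fst \<phi> k, \<lambda>k. 0)"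
definition P2 :: "real \<Rightarrow> dens \<Rightarrow> dens" where
  "P2 s \<phi> = (\<lambda>k. 0, \<lambda>k. chi s k * snd \<phi> k)"

text \<open>The spectral family E(t).  E(0) = lim_{t->0+} E(t) = P^1(infinity).\<close>
definition Efam :: "real \<Rightarrow> real \<Rightarrow> dens \<Rightarrow> dens" where
  "Efam q t \<phi> =
    (if t < 0 then
       (\<lambda>k. fst (P1 (- ln (-2*t) / q) \<phi>) k - fst (P1 (ln (-2*t) / q) \<phi>) k,
        \<lambda>k. snd (P1 (- ln (-2*t) / q) \<phi>) k - snd (P1 (ln (-2*t) / q) \<phi>) k)
     else if t = 0 then (fst \<phi>, \<lambda>k. 0)
     else
       (\<lambda>k. fst (P2 (ln (2*t) / q) \<phi>) k - fst (P2 (- ln (2*t) / q) \<phi>) k + fst \<phi> k,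
        \<lambda>k. snd (P2 (ln (2*t) / q) \<phi>) k - snd (P2 (- ln (2*t) / q) \<phi>) k + snd \<phi> k))"

definition tagged_partition_RS ::
    "real \<Rightarrow> real \<Rightarrow> nat \<Rightarrow> (nat \<Rightarrow> real) \<Rightarrow> (nat \<Rightarrow> real) \<Rightarrow> bool" where
  "tagged_partition_RS a b n x \<xi> \<longleftrightarrow>
     x 0 = a \<and> x n = b \<and>
     (\<forall>i<n. x i < x (Suc i) \<and> x i \<le> \<xi> i \<and> \<xi> i \<le> x (Suc i))"

definition has_RS_integral ::
    "(real \<Rightarrow> complex) \<Rightarrow> (real \<Rightarrow> complex) \<Rightarrow> real \<Rightarrow> real \<Rightarrow> complex \<Rightarrow> bool" where
  "has_RS_integral f g a b I \<longleftrightarrow>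
     (\<forall>\<epsilon>>0. \<exists>\<delta>>0. \<forall>n x \<xi>.
        tagged_partition_RS a b n x \<xi> \<and> (\<forall>i<n. x (Suc i) - x i < \<delta>) \<longrightarrow>
        cmod ((\<Sum>i<n. f (\<xi> i) * (g (x (Suc i)) - g (x i))) - I) < \<epsilon>)"

end

theory Submission
  imports Defs
begin


definition chir :: "real \<Rightarrow> real \<Rightarrow> real" where
  "chir s k = (if k \<le> s then 1 else 0)"
definition c1 :: "real \<Rightarrow> real \<Rightarrow> real \<Rightarrow> real" where
  "c1 q t k = (if t < 0 then chir (- ln (-2*t) / q) k - chir (ln (-2*t) / q) k else 1)"
definition c2 :: "real \<Rightarrow> real \<Rightarrow> real \<Rightarrow> real" where
  "c2 q t k = (if t \<le> 0 then 0 else chir (ln (2*t) / q) k - chir (- ln (2*t) / q) k + 1)"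

lemma chi_chir: "chi s k = complex_of_real (chir s k)"
  by (simp add: chi_def chir_def)

lemma Efam_eq: "Efam q t g = (\<lambda>k. complex_of_real (c1 q t k) * fst g k, \<lambda>k. complex_of_real (c2 q t k) * snd g k)"
  unfolding Efam_def P1_def P2_def c1_def c2_def chi_chir
  by (auto simp: fun_eq_iff algebra_simps)

definition H1 :: "real \<Rightarrow> dens \<Rightarrow> dens \<Rightarrow> real \<Rightarrow> complex" where
  "H1 q f g k = complex_of_real (S11 q k) * fst f k * cnj (fst g k)"
definition H2 :: "real \<Rightarrow> dens \<Rightarrow> dens \<Rightarrow> real \<Rightarrow> complex" where
  "H2 q f g k = complex_of_real (S22 q k) * snd f k * cnj (snd g k)"

lemma ipK_E: "ipK q f (Efam q t g) = (LINT k|lborel. complex_of_real (c1 q t k) * H1 q f g k + complex_of_real (c2 q t k) * H2 q f g k)"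
  unfolding ipK_def Efam_eq H1_def H2_def by (simp add: algebra_simps)

lemma ipK_NP: "ipK q f (NP q g) = (LINT k|lborel. complex_of_real (K11 q k) * H1 q f g k + complex_of_real (K22 q k) * H2 q f g k)"
  unfolding ipK_def NP_def H1_def H2_def by (simp add: algebra_simps)

lemma S11_nonneg: "0 < q \<Longrightarrow> 0 \<le> S11 q k"
  unfolding S11_def by (auto intro!: divide_nonneg_nonneg)
lemma S22_nonneg: "0 < q \<Longrightarrow> 0 \<le> S22 q k"
  unfolding S22_def by (auto intro!: divide_nonneg_nonneg add_nonneg_nonneg)

lemma S11_meas: "S11 q \<in> borel_measurable lborel"
  unfolding S11_def by measurable
lemma S22_meas: "S22 q \<in> borel_measurable lborel"
  unfolding S22_def by measurable

lemma H1_int: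
  assumes "0 < q" "in_K q f" "in_K q g"
  shows "integrable lborel (H1 q f g)"
proof (rule Bochner_Integration.integrable_bound)
  show "integrable lborel (\<lambda>k. S11 q k * (cmod (fst f k))\<^sup>2 + S11 q k * (cmod (fst g k))\<^sup>2)"
    using assms by (auto simp: in_K_def)
  show "H1 q f g \<in> borel_measurable lborel"
  proof -
    have m: "fst f \<in> borel_measurable borel" "fst g \<in> borel_measurable borel"
      using assms by (auto simp: in_K_def)
    have m2: "S11 q \<in> borel_measurable borel" using S11_meas by simp
    have m3: "(\<lambda>x. cnj (fst g x)) \<in> borel_measurable borel"
      by (rule borel_measurable_continuous_on[OF continuous_on_cnj[OF continuous_on_id] m(2)])
    show ?thesis unfolding H1_def measurable_lborel2 using m m2 m3 by measurable
  qed
  show "AE k in lborel. norm (H1 q f g k) \<le> norm (S11 q k * (cmod (fst f k))\<^sup>2 + S11 q k * (cmod (fst g k))\<^sup>2)"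
  proof (rule AE_I2)
    fix k
    have s: "0 \<le> S11 q k" using S11_nonneg assms(1) .
    have "2 * (cmod (fst f k) * cmod (fst g k)) \<le> (cmod (fst f k))\<^sup>2 + (cmod (fst g k))\<^sup>2"
      using sum_squares_bound[of "cmod (fst f k)" "cmod (fst g k)"] by (simp add: algebra_simps)
    moreover have "0 \<le> cmod (fst f k) * cmod (fst g k)" by simp
    ultimately have "cmod (fst f k) * cmod (fst g k) \<le> (cmod (fst f k))\<^sup>2 + (cmod (fst g k))\<^sup>2" by linarith
    then have "S11 q k * (cmod (fst f k) * cmod (fst g k)) \<le> S11 q k * ((cmod (fst f k))\<^sup>2 + (cmod (fst g k))\<^sup>2)"
      using s by (intro mult_left_mono)
    then show "norm (H1 q f g k) \<le> norm (S11 q k * (cmod (fst f k))\<^sup>2 + S11 q k * (cmod (fst g k))\<^sup>2)"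
      using s unfolding H1_def by (simp add: norm_mult algebra_simps)
  qed
qed

lemma H2_int:
  assumes "0 < q" "in_K q f" "in_K q g"
  shows "integrable lborel (H2 q f g)"
proof (rule Bochner_Integration.integrable_bound)
  show "integrable lborel (\<lambda>k. S22 q k * (cmod (snd f k))\<^sup>2 + S22 q k * (cmod (snd g k))\<^sup>2)"
    using assms by (auto simp: in_K_def)
  show "H2 q f g \<in> borel_measurable lborel"
  proof -
    have m: "snd f \<in> borel_measurable borel" "snd g \<in> borel_measurable borel"
      using assms by (auto simp: in_K_def)
    have m2: "S22 q \<in> borel_measurable borel" using S22_meas by simp
    have m3: "(\<lambda>x. cnj (snd g x)) \<in> borel_measurable borel"
      by (rule borel_measurable_continuous_on[OF continuous_on_cnj[OF continuous_on_id] m(2)])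
    show ?thesis unfolding H2_def measurable_lborel2 using m m2 m3 by measurable
  qed
  show "AE k in lborel. norm (H2 q f g k) \<le> norm (S22 q k * (cmod (snd f k))\<^sup>2 + S22 q k * (cmod (snd g k))\<^sup>2)"
  proof (rule AE_I2)
    fix k
    have s: "0 \<le> S22 q k" using S22_nonneg assms(1) .
    have "2 * (cmod (snd f k) * cmod (snd g k)) \<le> (cmod (snd f k))\<^sup>2 + (cmod (snd g k))\<^sup>2"
      using sum_squares_bound[of "cmod (snd f k)" "cmod (snd g k)"] by (simp add: algebra_simps)
    moreover have "0 \<le> cmod (snd f k) * cmod (snd g k)" by simp
    ultimately have "cmod (snd f k) * cmod (snd g k) \<le> (cmod (snd f k))\<^sup>2 + (cmod (snd g k))\<^sup>2" by linarith
    then have "S22 q k * (cmod (snd f k) * cmod (snd g k)) \<le> S22 q k * ((cmod (snd f k))\<^sup>2 + (cmod (snd g k))\<^sup>2)"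
      using s by (intro mult_left_mono)
    then show "norm (H2 q f g k) \<le> norm (S22 q k * (cmod (snd f k))\<^sup>2 + S22 q k * (cmod (snd g k))\<^sup>2)"
      using s unfolding H2_def by (simp add: norm_mult algebra_simps)
  qed
qed

lemma c1_meas: "c1 q t \<in> borel_measurable lborel"
  unfolding c1_def chir_def by measurable
lemma c2_meas: "c2 q t \<in> borel_measurable lborel"
  unfolding c2_def chir_def by measurable

lemma c1_bound: "\<bar>c1 q t k\<bar> \<le> 2"
  unfolding c1_def chir_def by auto
lemma c2_bound: "\<bar>c2 q t k\<bar> \<le> 2"
  unfolding c2_def chir_def by auto

lemma int_cmult:
  assumes "integrable lborel h" "c \<in> borel_measurable lborel" "\<And>k. \<bar>c k\<bar> \<le> 2"
  shows "integrable lborel (\<lambda>k. complex_of_real (c k) * h k)"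
proof (rule Bochner_Integration.integrable_bound)
  show "integrable lborel (\<lambda>k. 2 * norm (h k))" using assms(1) by auto
  show "(\<lambda>k. complex_of_real (c k) * h k) \<in> borel_measurable lborel"
    using assms by measurable
  show "AE k in lborel. norm (complex_of_real (c k) * h k) \<le> norm (2 * norm (h k))"
    using assms(3) by (auto simp: norm_mult intro!: mult_right_mono)
qed

lemma part_range:
  assumes "tagged_partition_RS a b n x \<xi>" "i \<le> n"
  shows "a \<le> x i \<and> x i \<le> b"
proof -
  have inc: "\<And>i. i < n \<Longrightarrow> x i < x (Suc i)" using assms(1) by (auto simp: tagged_partition_RS_def)
  have A: "\<And>j. i + j \<le> n \<Longrightarrow> x i \<le> x (i + j)" for i
  proof -
    fix j show "i + j \<le> n \<Longrightarrow> x i \<le> x (i + j)"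
    proof (induction j)
      case 0 then show ?case by simp
    next
      case (Suc j)
      then have "x i \<le> x (i + j)" by simp
      also have "\<dots> < x (Suc (i + j))" using inc Suc.prems by simp
      finally show ?case by simp
    qed
  qed
  have "x 0 \<le> x (0 + i)" using A[of 0 i] assms(2) by simp
  moreover have "x i \<le> x (i + (n - i))" using A[of i "n - i"] assms(2) by simp
  ultimately show ?thesis using assms by (auto simp: tagged_partition_RS_def)
qed

lemma step_sum:
  fixes x \<xi> :: "nat \<Rightarrow> real" and c :: "real \<Rightarrow> real"
  assumes "\<forall>i<n. x i < x (Suc i) \<and> x i \<le> \<xi> i \<and> \<xi> i \<le> x (Suc i)"
    and "\<forall>i<n. x (Suc i) - x i < \<delta>"
    and "\<forall>i\<le>n. c (x i) = 0 \<or> c (x i) = 1"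
    and "\<forall>i\<le>n. c (x i) = 0 \<longrightarrow> x i \<le> lam"
    and "\<forall>i\<le>n. c (x i) = 1 \<longrightarrow> lam \<le> x i"
    and "c (x 0) = 0"
  shows "(c (x n) = 0 \<longrightarrow> (\<Sum>i<n. \<xi> i * (c (x (Suc i)) - c (x i))) = 0) \<and>
         (c (x n) = 1 \<longrightarrow> \<bar>(\<Sum>i<n. \<xi> i * (c (x (Suc i)) - c (x i))) - lam\<bar> < \<delta>)"
  using assms
proof (induction n)
  case 0 then show ?case by simp
next
  case (Suc n)
  have IH: "(c (x n) = 0 \<longrightarrow> (\<Sum>i<n. \<xi> i * (c (x (Suc i)) - c (x i))) = 0) \<and>
         (c (x n) = 1 \<longrightarrow> \<bar>(\<Sum>i<n. \<xi> i * (c (x (Suc i)) - c (x i))) - lam\<bar> < \<delta>)"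
    using Suc.prems by (intro Suc.IH) auto
  have h: "x n < x (Suc n)" "x n \<le> \<xi> n" "\<xi> n \<le> x (Suc n)" "x (Suc n) - x n < \<delta>"
    using Suc.prems by auto
  have cn: "c (x n) = 0 \<or> c (x n) = 1" "c (x n) = 0 \<longrightarrow> x n \<le> lam" "c (x n) = 1 \<longrightarrow> lam \<le> x n"
    using Suc.prems(3,4,5) by auto
  have cs: "c (x (Suc n)) = 0 \<or> c (x (Suc n)) = 1" "c (x (Suc n)) = 0 \<longrightarrow> x (Suc n) \<le> lam"
     "c (x (Suc n)) = 1 \<longrightarrow> lam \<le> x (Suc n)"
    using Suc.prems(3,4,5) by (auto simp del: le_Suc_eq)
  show ?case
  proof (cases "c (x (Suc n)) = 0")
    case True
    then have "c (x n) = 0" using cn cs h by auto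
    then show ?thesis using IH True by simp
  next
    case False
    then have e1: "c (x (Suc n)) = 1" using cs by auto
    show ?thesis
    proof (cases "c (x n) = 0")
      case True
      then have s0: "(\<Sum>i<n. \<xi> i * (c (x (Suc i)) - c (x i))) = 0" using IH by simp
      have "x n \<le> lam" "lam \<le> x (Suc n)" using True e1 cn cs by auto
      then have "\<bar>\<xi> n - lam\<bar> < \<delta>" using h by linarith
      then show ?thesis using s0 True e1 by simp
    next
      case False
      then have "c (x n) = 1" using cn by auto
      then show ?thesis using IH e1 by simp
    qed
  qed
qed


lemma lnexp:
  fixes a q k :: real
  assumes "0 < a" "0 < q"
  shows "(\<bar>k\<bar> \<le> - ln a / q) \<longleftrightarrow> (a \<le> exp (-\<bar>k\<bar>*q))"
    and "(- ln a / q \<le> \<bar>k\<bar>) \<longleftrightarrow> (exp (-\<bar>k\<bar>*q) \<le> a)"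
proof -
  have e1: "a \<le> exp (-\<bar>k\<bar>*q) \<longleftrightarrow> ln a \<le> -\<bar>k\<bar>*q"
  proof -
    have "a \<le> exp (-\<bar>k\<bar>*q) \<longleftrightarrow> exp (ln a) \<le> exp (-\<bar>k\<bar>*q)" using assms by simp
    also have "\<dots> \<longleftrightarrow> ln a \<le> -\<bar>k\<bar>*q" by (rule exp_le_cancel_iff)
    finally show ?thesis .
  qed
  have e2: "exp (-\<bar>k\<bar>*q) \<le> a \<longleftrightarrow> -\<bar>k\<bar>*q \<le> ln a"
  proof -
    have "exp (-\<bar>k\<bar>*q) \<le> a \<longleftrightarrow> exp (-\<bar>k\<bar>*q) \<le> exp (ln a)" using assms by simp
    also have "\<dots> \<longleftrightarrow> -\<bar>k\<bar>*q \<le> ln a" by (rule exp_le_cancel_iff)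
    finally show ?thesis .
  qed
  show "(\<bar>k\<bar> \<le> - ln a / q) \<longleftrightarrow> (a \<le> exp (-\<bar>k\<bar>*q))"
    using e1 pos_le_divide_eq[OF assms(2), of "\<bar>k\<bar>" "- ln a"] by auto
  show "(- ln a / q \<le> \<bar>k\<bar>) \<longleftrightarrow> (exp (-\<bar>k\<bar>*q) \<le> a)"
    using e2 pos_divide_le_eq[OF assms(2), of "- ln a" "\<bar>k\<bar>"] by auto
qed

lemma c1_props:
  assumes "0 < q" "-1/2 \<le> t" "t \<le> 1/2"
  shows "(c1 q t k = 0 \<or> c1 q t k = 1) \<and> (c1 q t k = 0 \<longrightarrow> t \<le> K11 q k) \<and> (c1 q t k = 1 \<longrightarrow> K11 q k \<le> t)"
proof (cases "t < 0")
  case True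
  define s where "s = - ln (-2*t) / q"
  have "ln (-2*t) \<le> 0" using True assms by simp
  then have s0: "0 \<le> s" using assms(1) by (simp add: s_def divide_nonpos_pos)
  have s1: "ln (-2*t)/q = -s" by (simp add: s_def)
  have i1: "\<bar>k\<bar> \<le> s \<longleftrightarrow> -2*t \<le> exp(-\<bar>k\<bar>*q)" using lnexp(1)[of "-2*t" q k] True assms(1) by (simp add: s_def)
  have i2: "s \<le> \<bar>k\<bar> \<longleftrightarrow> exp(-\<bar>k\<bar>*q) \<le> -2*t" using lnexp(2)[of "-2*t" q k] True assms(1) by (simp add: s_def)
  have c: "c1 q t k = chir s k - chir (-s) k" unfolding c1_def using True s1 by (simp add: s_def)
  have K: "K11 q k = -(1/2)*exp(-\<bar>k\<bar>*q)" by (simp add: K11_def)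
  consider "k \<le> -s" | "-s < k \<and> k \<le> s" | "s < k" by linarith
  then show ?thesis
  proof cases
    case 1
    then have z: "c1 q t k = 0" using s0 by (simp add: c chir_def)
    have "s \<le> \<bar>k\<bar>" using 1 s0 by linarith
    then have "exp(-\<bar>k\<bar>*q) \<le> -2*t" using i2 by simp
    then show ?thesis using z K by simp
  next
    case 2
    then have z: "c1 q t k = 1" using s0 by (simp add: c chir_def)
    have "\<bar>k\<bar> \<le> s" using 2 s0 by linarith
    then have "-2*t \<le> exp(-\<bar>k\<bar>*q)" using i1 by simp
    then show ?thesis using z K by simp
  next
    case 3
    then have z: "c1 q t k = 0" using s0 by (simp add: c chir_def)
    have "s \<le> \<bar>k\<bar>" using 3 s0 by linarith
    then have "exp(-\<bar>k\<bar>*q) \<le> -2*t" using i2 by simp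
    then show ?thesis using z K by simp
  qed
next
  case False
  have "K11 q k < 0" unfolding K11_def by simp
  then show ?thesis using False unfolding c1_def by simp
qed

lemma c2_props:
  assumes "0 < q" "-1/2 \<le> t" "t \<le> 1/2"
  shows "(c2 q t k = 0 \<or> c2 q t k = 1) \<and> (c2 q t k = 0 \<longrightarrow> t \<le> K22 q k) \<and> (c2 q t k = 1 \<longrightarrow> K22 q k \<le> t)"
proof (cases "t \<le> 0")
  case False
  define s where "s = - ln (2*t) / q"
  have "ln (2*t) \<le> 0" using False assms by simp
  then have s0: "0 \<le> s" using assms(1) by (simp add: s_def divide_nonpos_pos)
  have s1: "ln (2*t)/q = -s" by (simp add: s_def)
  have i1: "\<bar>k\<bar> \<le> s \<longleftrightarrow> 2*t \<le> exp(-\<bar>k\<bar>*q)" using lnexp(1)[of "2*t" q k] False assms(1) by (simp add: s_def)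
  have i2: "s \<le> \<bar>k\<bar> \<longleftrightarrow> exp(-\<bar>k\<bar>*q) \<le> 2*t" using lnexp(2)[of "2*t" q k] False assms(1) by (simp add: s_def)
  have c: "c2 q t k = chir (-s) k - chir s k + 1" unfolding c2_def using False s1 by (simp add: s_def)
  have K: "K22 q k = (1/2)*exp(-\<bar>k\<bar>*q)" by (simp add: K22_def)
  consider "k \<le> -s" | "-s < k \<and> k \<le> s" | "s < k" by linarith
  then show ?thesis
  proof cases
    case 1
    then have z: "c2 q t k = 1" using s0 by (simp add: c chir_def)
    have "s \<le> \<bar>k\<bar>" using 1 s0 by linarith
    then have "exp(-\<bar>k\<bar>*q) \<le> 2*t" using i2 by simp
    then show ?thesis using z K by simp
  next
    case 2
    then have z: "c2 q t k = 0" using s0 by (simp add: c chir_def)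
    have "\<bar>k\<bar> \<le> s" using 2 s0 by linarith
    then have "2*t \<le> exp(-\<bar>k\<bar>*q)" using i1 by simp
    then show ?thesis using z K by simp
  next
    case 3
    then have z: "c2 q t k = 1" using s0 by (simp add: c chir_def)
    have "s \<le> \<bar>k\<bar>" using 3 s0 by linarith
    then have "exp(-\<bar>k\<bar>*q) \<le> 2*t" using i2 by simp
    then show ?thesis using z K by simp
  qed
next
  case True
  have "0 < K22 q k" unfolding K22_def by simp
  then show ?thesis using True unfolding c2_def by simp
qed

lemma c1_start: "c1 q (-1/2) k = 0" unfolding c1_def chir_def by simp
lemma c2_start: "c2 q (-1/2) k = 0" unfolding c2_def by simp
lemma c1_end: "c1 q (1/2) k = 1" unfolding c1_def by simp
lemma c2_end: "c2 q (1/2) k = 1" unfolding c2_def chir_def by simp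


lemma K11_meas: "K11 q \<in> borel_measurable lborel" unfolding K11_def by measurable
lemma K22_meas: "K22 q \<in> borel_measurable lborel" unfolding K22_def by measurable
lemma K11_bound: assumes "0 < q" shows "\<bar>K11 q k\<bar> \<le> 2"
proof -
  have "0 \<le> \<bar>k\<bar>*q" using assms by simp
  then have e: "exp (- \<bar>k\<bar> * q) \<le> 1" by simp
  have "\<bar>K11 q k\<bar> = (1/2) * exp (- \<bar>k\<bar> * q)" by (simp add: K11_def abs_mult)
  then show ?thesis using e by linarith
qed
lemma K22_bound: assumes "0 < q" shows "\<bar>K22 q k\<bar> \<le> 2"
proof -
  have "0 \<le> \<bar>k\<bar>*q" using assms by simp
  then have e: "exp (- \<bar>k\<bar> * q) \<le> 1" by simp
  have "\<bar>K22 q k\<bar> = (1/2) * exp (- \<bar>k\<bar> * q)" by (simp add: K22_def abs_mult)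
  then show ?thesis using e by linarith
qed

theorem theorem3p5:
  fixes R r :: real and f g :: dens
  assumes "0 < r" and "r < R"
    and "in_K (q_of R r) f" and "in_K (q_of R r) g"
  shows "has_RS_integral (\<lambda>t. complex_of_real t)
           (\<lambda>t. ipK (q_of R r) f (Efam (q_of R r) t g))
           (-1/2) (1/2)
           (ipK (q_of R r) f (NP (q_of R r) g))"
proof -
  define q where "q = q_of R r"
  have "1/(2*R) < 1/(2*r)" using assms by (intro divide_strict_left_mono) auto
  then have q0: "0 < q" unfolding q_def q_of_def by simp
  have fK: "in_K q f" "in_K q g" using assms by (auto simp: q_def)
  define h1 where "h1 = H1 q f g"
  define h2 where "h2 = H2 q f g"
  have i1: "integrable lborel h1" unfolding h1_def using H1_int q0 fK by blast
  have i2: "integrable lborel h2" unfolding h2_def using H2_int q0 fK by blast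
  define G where "G t k = complex_of_real (c1 q t k) * h1 k + complex_of_real (c2 q t k) * h2 k" for t k
  have iG: "integrable lborel (G t)" for t
    unfolding G_def using int_cmult[OF i1 c1_meas c1_bound] int_cmult[OF i2 c2_meas c2_bound] by auto
  have F: "ipK q f (Efam q t g) = integral\<^sup>L lborel (G t)" for t
    unfolding ipK_E G_def h1_def h2_def ..
  define J where "J k = complex_of_real (K11 q k) * h1 k + complex_of_real (K22 q k) * h2 k" for k
  have I: "ipK q f (NP q g) = integral\<^sup>L lborel J"
    unfolding ipK_NP J_def h1_def h2_def ..
  have iJ: "integrable lborel J"
    unfolding J_def using int_cmult[OF i1 K11_meas K11_bound[OF q0]] int_cmult[OF i2 K22_meas K22_bound[OF q0]] by auto
  define M where "M = (LINT k|lborel. norm (h1 k) + norm (h2 k))"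
  have iM: "integrable lborel (\<lambda>k. norm (h1 k) + norm (h2 k))" using i1 i2 by auto
  have M0: "0 \<le> M" unfolding M_def by (rule integral_nonneg_AE) auto
  show ?thesis unfolding has_RS_integral_def q_def[symmetric] F I
  proof (intro allI impI)
    fix \<epsilon> :: real assume e: "0 < \<epsilon>"
    define \<delta> where "\<delta> = \<epsilon> / (M + 1)"
    have d0: "0 < \<delta>" unfolding \<delta>_def using e M0 by simp
    have dM: "\<delta> * M < \<epsilon>"
    proof -
      have "\<delta> * M = \<epsilon> * (M / (M + 1))" unfolding \<delta>_def by simp
      also have "\<dots> < \<epsilon> * 1" using e M0 by (intro mult_strict_left_mono) auto
      finally show ?thesis by simp
    qed
    show "\<exists>\<delta>>0. \<forall>n x \<xi>. tagged_partition_RS (-1/2) (1/2) n x \<xi> \<and> (\<forall>i<n. x (Suc i) - x i < \<delta>) \<longrightarrow>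
        cmod ((\<Sum>i<n. complex_of_real (\<xi> i) * (integral\<^sup>L lborel (G (x (Suc i))) - integral\<^sup>L lborel (G (x i)))) - integral\<^sup>L lborel J) < \<epsilon>"
    proof (intro exI[of _ \<delta>] conjI allI impI d0)
      fix n x \<xi>
      assume H: "tagged_partition_RS (-1/2) (1/2) n x \<xi> \<and> (\<forall>i<n. x (Suc i) - x i < \<delta>)"
      have P: "tagged_partition_RS (-1/2) (1/2) n x \<xi>" and mesh: "\<forall>i<n. x (Suc i) - x i < \<delta>" using H by auto
      have rng: "\<forall>i\<le>n. -1/2 \<le> x i \<and> x i \<le> 1/2" using part_range[OF P] by blast
      have x0: "x 0 = -1/2" "x n = 1/2" and tg: "\<forall>i<n. x i < x (Suc i) \<and> x i \<le> \<xi> i \<and> \<xi> i \<le> x (Suc i)"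
        using P by (auto simp: tagged_partition_RS_def)
      define D where "D k = (\<Sum>i<n. complex_of_real (\<xi> i) * (G (x (Suc i)) k - G (x i) k)) - J k" for k
      have iT: "integrable lborel (\<lambda>k. complex_of_real (\<xi> i) * (G (x (Suc i)) k - G (x i) k))" for i
        using iG by auto
      have iS: "integrable lborel (\<lambda>k. \<Sum>i<n. complex_of_real (\<xi> i) * (G (x (Suc i)) k - G (x i) k))"
        using iT by auto
      have iD: "integrable lborel D" unfolding D_def using iS iJ by auto
      have sum_eq: "(\<Sum>i<n. complex_of_real (\<xi> i) * (integral\<^sup>L lborel (G (x (Suc i))) - integral\<^sup>L lborel (G (x i)))) - integral\<^sup>L lborel J
          = integral\<^sup>L lborel D"
      proof -
        have "integral\<^sup>L lborel D = integral\<^sup>L lborel (\<lambda>k. \<Sum>i<n. complex_of_real (\<xi> i) * (G (x (Suc i)) k - G (x i) k)) - integral\<^sup>L lborel J"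
          unfolding D_def by (rule Bochner_Integration.integral_diff[OF iS iJ])
        also have "integral\<^sup>L lborel (\<lambda>k. \<Sum>i<n. complex_of_real (\<xi> i) * (G (x (Suc i)) k - G (x i) k))
            = (\<Sum>i<n. integral\<^sup>L lborel (\<lambda>k. complex_of_real (\<xi> i) * (G (x (Suc i)) k - G (x i) k)))"
          using iT by (intro Bochner_Integration.integral_sum) auto
        also have "\<dots> = (\<Sum>i<n. complex_of_real (\<xi> i) * (integral\<^sup>L lborel (G (x (Suc i))) - integral\<^sup>L lborel (G (x i))))"
          using iG by (intro sum.cong refl) (simp add: Bochner_Integration.integral_diff)
        finally show ?thesis by simp
      qed
      have pw: "norm (D k) \<le> \<delta> * (norm (h1 k) + norm (h2 k))" for k
      proof -
        define A1 where "A1 = (\<Sum>i<n. \<xi> i * (c1 q (x (Suc i)) k - c1 q (x i) k))"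
        define A2 where "A2 = (\<Sum>i<n. \<xi> i * (c2 q (x (Suc i)) k - c2 q (x i) k))"
        have tm: "complex_of_real (\<xi> i) * (G (x (Suc i)) k - G (x i) k)
           = complex_of_real (\<xi> i * (c1 q (x (Suc i)) k - c1 q (x i) k)) * h1 k
           + complex_of_real (\<xi> i * (c2 q (x (Suc i)) k - c2 q (x i) k)) * h2 k" for i
          unfolding G_def by (simp add: algebra_simps)
        have Dk: "D k = complex_of_real (A1 - K11 q k) * h1 k + complex_of_real (A2 - K22 q k) * h2 k"
          unfolding D_def J_def tm sum.distrib A1_def A2_def of_real_sum sum_distrib_right[symmetric]
          by (simp add: algebra_simps)
        have a1: "\<bar>A1 - K11 q k\<bar> < \<delta>"
        proof -
          have pr: "c1 q (x i) k = 0 \<or> c1 q (x i) k = 1" "c1 q (x i) k = 0 \<longrightarrow> x i \<le> K11 q k"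
              "c1 q (x i) k = 1 \<longrightarrow> K11 q k \<le> x i" if "i \<le> n" for i
            using c1_props[OF q0, of "x i" k] rng that by auto
          have st: "c1 q (x 0) k = 0" unfolding x0(1) by (rule c1_start)
          have en: "c1 q (x n) k = 1" unfolding x0(2) by (rule c1_end)
          have "c1 q (x n) k = 1 \<longrightarrow> \<bar>A1 - K11 q k\<bar> < \<delta>"
            unfolding A1_def
            using step_sum[of n x \<xi> \<delta> "\<lambda>t. c1 q t k" "K11 q k", OF tg mesh _ _ _ st] pr
            by blast
          then show ?thesis using en by simp
        qed
        have a2: "\<bar>A2 - K22 q k\<bar> < \<delta>"
        proof -
          have pr: "c2 q (x i) k = 0 \<or> c2 q (x i) k = 1" "c2 q (x i) k = 0 \<longrightarrow> x i \<le> K22 q k"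
              "c2 q (x i) k = 1 \<longrightarrow> K22 q k \<le> x i" if "i \<le> n" for i
            using c2_props[OF q0, of "x i" k] rng that by auto
          have st: "c2 q (x 0) k = 0" unfolding x0(1) by (rule c2_start)
          have en: "c2 q (x n) k = 1" unfolding x0(2) by (rule c2_end)
          have "c2 q (x n) k = 1 \<longrightarrow> \<bar>A2 - K22 q k\<bar> < \<delta>"
            unfolding A2_def
            using step_sum[of n x \<xi> \<delta> "\<lambda>t. c2 q t k" "K22 q k", OF tg mesh _ _ _ st] pr
            by blast
          then show ?thesis using en by simp
        qed
        have "norm (D k) \<le> \<bar>A1 - K11 q k\<bar> * norm (h1 k) + \<bar>A2 - K22 q k\<bar> * norm (h2 k)"
          unfolding Dk by (rule order_trans[OF norm_triangle_ineq]) (simp add: norm_mult flip: of_real_diff)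
        also have "\<dots> \<le> \<delta> * norm (h1 k) + \<delta> * norm (h2 k)"
          using a1 a2 by (intro add_mono mult_right_mono) auto
        finally show ?thesis by (simp add: algebra_simps)
      qed
      have "norm (integral\<^sup>L lborel D) \<le> (LINT k|lborel. norm (D k))"
        by (rule integral_norm_bound)
      also have "\<dots> \<le> (LINT k|lborel. \<delta> * (norm (h1 k) + norm (h2 k)))"
        using iD iM pw by (intro integral_mono) auto
      also have "\<dots> = \<delta> * M" unfolding M_def by simp
      also have "\<dots> < \<epsilon>" by (rule dM)
      finally show "cmod ((\<Sum>i<n. complex_of_real (\<xi> i) * (integral\<^sup>L lborel (G (x (Suc i))) - integral\<^sup>L lborel (G (x i)))) - integral\<^sup>L lborel J) < \<epsilon>"
        using sum_eq by simp
    qed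
  qed
qed

end
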